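(* Let $(\Omega,\mathcal E_\Omega,\mathbb P)$ be a probability space, $X_{1:T}$ data (a measurable map into $(\underline{\mathbf S}_T,\underline{\mathcal S}_T)$), $\Theta$ a Borel subset of $\mathbf R^p$, $U$ uniform on $[0,1]$ independent of the data, $\theta^*_T=H_T(X_{1:T})$ a proxy of $\theta_0\in\Theta$ with $H_T$ measurable, and $\theta^\bullet_T$ a generic proxy. Assume $\theta^\bullet_T$ is asymptotically normal: there exist a random vector $\xi^\bullet$ with $\xi^\bullet\sim\mathcal N(0,\Sigma^{1/2})$ and random vectors $R^\bullet_T=o_{\mathbb P}(T^{-1/2})$ such that $\theta^\bullet_T=\theta_0+\xi^\bullet/T^{1/2}+R^\bullet_T$. Let $\hat\Sigma_T$ be random matrices with $\hat\Sigma_T\to\Sigma$ in probability as $T\to\infty$, and let $\alpha\in(0,1)$. Then for every sub-$\sigma$-algebra $\mathcal E_T\subset\sigma(X_{1:T})$ and every $k\in\{1,\dots,p\}$: (i) $\displaystyle\lim_{T\to\infty}\mathbb E\Big\{\mathbb P\Big(\theta^\bullet_{T,k}\in\Big[\theta^*_{T,k}-\tfrac{\hat s_{T,k,k}}{\sqrt T}u_{1-\alpha/2},\ \theta^*_{T,k}-\tfrac{\hat s_{T,k,k}}{\sqrt T}u_{\alpha/2}\Big]\ \Big|\ \mathcal E_T\Big)\Big\}<1-\alpha$; (ii) $\displaystyle\lim_{T\to\infty}\mathbb E\Big\{\mathbb P\Big(\theta^\bullet_{T,k}\in\Big[\theta^*_{T,k}-\sqrt{\tfrac2T}\hat s_{T,k,k}u_{1-\alpha/2},\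 \theta^*_{T,k}-\sqrt{\tfrac2T}\hat s_{T,k,k}u_{\alpha/2}\Big]\ \Big|\ \mathcal E_T\Big)\Big\}=1-\alpha$, where $\theta^*_{T,k},\theta^\bullet_{T,k}$ are the $k$-th coordinates, $\hat s_{T,k,k}^2$ is the $k$-th diagonal entry of $\hat\Sigma_T$, and $u_{\beta}$ is the $\beta$-quantile of $\mathcal N(0,1)$.
   Context: A generic proxy $\theta^\bullet_T$ is a measurable map $\Omega\to\Theta$ that is independent of $X_{1:T}$ and has the same distribution as $\theta^*_T$. $\mathcal N(m,S)$ denotes the Gaussian distribution with mean $m$ and standard deviation (matrix square root of the covariance) $S$, so $\mathcal N(0,\Sigma^{1/2})$ has covariance $\Sigma$. *)

theory Defs
  imports "HOL-Probability.Probability"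
begin

definition std_gauss :: "real measure" where
  "std_gauss = density lborel std_normal_density"

definition std_gauss_vec :: "(real ^ 'n) measure" where
  "std_gauss_vec = distr (PiM UNIV (\<lambda>_::'n. std_gauss)) borel (\<lambda>f. \<chi> i. f i)"

text \<open>The paper's parametrisation: N(m,S) is the law of m + S Z, Z standard
  Gaussian, S the standard deviation (matrix square root of the covariance).\<close>
definition gauss_vec :: "real ^ 'n \<Rightarrow> real ^ 'n ^ 'n \<Rightarrow> (real ^ 'n) measure" where
  "gauss_vec m S = distr std_gauss_vec borel (\<lambda>z. m + S *v z)"

definition normal_quantile :: "real \<Rightarrow> real" where
  "normal_quantile \<beta> = (THE u. measure std_gauss {..u} = \<beta>)"

definition cond_prob :: "'a measure \<Rightarrow> 'a measure \<Rightarrow> 'a set \<Rightarrow> 'a \<Rightarrow> real" where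
  "cond_prob M F A = real_cond_exp M F (indicator A)"

definition conv_in_prob :: "'a measure \<Rightarrow> (nat \<Rightarrow> 'a \<Rightarrow> 'b::real_normed_vector) \<Rightarrow> ('a \<Rightarrow> 'b) \<Rightarrow> bool" where
  "conv_in_prob M Y Z \<longleftrightarrow>
     (\<forall>\<epsilon>>0. (\<lambda>T. measure M {\<omega>\<in>space M. norm (Y T \<omega> - Z \<omega>) > \<epsilon>}) \<longlonglongrightarrow> 0)"

end

theory Submission
  imports Defs
begin



lemma rd_std_gauss: "real_distribution std_gauss"
  unfolding std_gauss_def by (rule real_dist_normal_dist)

interpretation SG: real_distribution std_gauss by (rule rd_std_gauss)

lemma std_gauss_Ioc_pos:
  assumes "x < y" shows "measure std_gauss {x<..y} > 0"
proof -
  define m where "m = max \<bar>x\<bar> \<bar>y\<bar>"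
  define c where "c = std_normal_density m"
  have cpos: "c > 0" unfolding c_def by (simp add: normal_density_pos)
  have lb: "c \<le> std_normal_density z" if "z \<in> {x<..y}" for z
  proof -
    have "\<bar>z\<bar> \<le> m" using that unfolding m_def by auto
    hence "z^2 \<le> m^2" using abs_ge_zero[of z] by (metis power2_abs power_mono)
    then show ?thesis unfolding c_def normal_density_def
      by (intro mult_left_mono) auto
  qed
  have "ennreal (c * (y - x)) = (\<integral>\<^sup>+ z. ennreal c * indicator {x<..y} z \<partial>lborel)"
    using assms cpos by (simp add: nn_integral_cmult_indicator ennreal_mult)
  also have "\<dots> \<le> (\<integral>\<^sup>+ z. ennreal (std_normal_density z) * indicator {x<..y} z \<partial>lborel)"
    by (intro nn_integral_mono) (auto simp: indicator_def lb)
  also have "\<dots> = emeasure std_gauss {x<..y}"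
    unfolding std_gauss_def by (subst emeasure_density) auto
  finally have "ennreal (c * (y - x)) \<le> emeasure std_gauss {x<..y}" .
  moreover have "emeasure std_gauss {x<..y} = ennreal (measure std_gauss {x<..y})"
    by (rule SG.emeasure_eq_measure)
  ultimately have "c * (y - x) \<le> measure std_gauss {x<..y}"
    by (simp add: ennreal_le_iff)
  moreover have "c * (y - x) > 0" using cpos assms by simp
  ultimately show ?thesis by linarith
qed

lemma std_gauss_singleton: "measure std_gauss {x} = 0"
proof -
  have "emeasure std_gauss {x} = (\<integral>\<^sup>+ y. ennreal (std_normal_density y) * indicator {x} y \<partial>lborel)"
    unfolding std_gauss_def by (subst emeasure_density) auto
  also have "\<dots> = 0"
    by (subst nn_integral_0_iff_AE) (auto intro!: AE_I[where N="{x}"] simp: indicator_def)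
  finally show ?thesis by (simp add: measure_def)
qed

lemma char_std_gauss: "char std_gauss t = complex_of_real (exp (- (t^2) / 2))"
  unfolding std_gauss_def by (simp add: char_std_normal_distribution)

lemma Phi_cont: "isCont (cdf std_gauss) x"
  using SG.isCont_cdf std_gauss_singleton by simp

lemma Phi_strict: "x < y \<Longrightarrow> cdf std_gauss x < cdf std_gauss y"
  using SG.cdf_diff_eq[of x y] std_gauss_Ioc_pos[of x y] by simp

lemma Phi_strict_iff: "cdf std_gauss x < cdf std_gauss y \<longleftrightarrow> x < y"
  by (metis Phi_strict linorder_neq_iff order_less_asym)

lemma char_distr_mult:
  assumes "real_distribution N"
  shows "char (distr N borel (\<lambda>x. c * x)) t = char N (c * t)"
proof -
  interpret N: real_distribution N by fact
  show ?thesis unfolding char_def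
    by (subst integral_distr) (auto simp: mult.assoc mult.commute mult.left_commute)
qed

lemma std_gauss_sym: "distr std_gauss borel uminus = std_gauss"
proof -
  have "distr std_gauss borel uminus = distr std_gauss borel (\<lambda>x. (-1) * x)" by simp
  moreover have "real_distribution (distr std_gauss borel (\<lambda>x. (-1) * x))"
    by (rule SG.real_distribution_distr) simp
  moreover have "char (distr std_gauss borel (\<lambda>x. (-1) * x)) = char std_gauss"
    by (rule ext, subst char_distr_mult[OF rd_std_gauss]) (simp add: char_std_gauss)
  ultimately show ?thesis using Levy_uniqueness rd_std_gauss by metis
qed

lemma Phi_neg: "cdf std_gauss (- x) = 1 - cdf std_gauss x"
proof -
  have "cdf std_gauss (- x) = measure (distr std_gauss borel uminus) {..-x}"
    by (simp add: std_gauss_sym cdf_def)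
  also have "\<dots> = measure std_gauss {x..}"
    by (subst measure_distr) (auto intro!: arg_cong[where f="measure std_gauss"])
  also have "{x..} = UNIV - {..<x}" by auto
  also have "measure std_gauss (UNIV - {..<x}) = 1 - measure std_gauss {..<x}"
    using SG.prob_compl[of "{..<x}"] by simp
  also have "{..<x} = {..x} - {x}" by auto
  also have "measure std_gauss ({..x} - {x}) = measure std_gauss {..x}"
    using SG.finite_measure_Diff[of "{..x}" "{x}"] std_gauss_singleton by simp
  finally show ?thesis by (simp add: cdf_def)
qed

lemma Phi_quantile:
  assumes "0 < \<beta>" "\<beta> < 1"
  shows "cdf std_gauss (normal_quantile \<beta>) = \<beta>"
proof -
  have "eventually (\<lambda>x. cdf std_gauss x < \<beta>) at_bot"
    using order_tendstoD(2)[OF SG.cdf_lim_at_bot assms(1)] .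
  then obtain a where a: "cdf std_gauss a < \<beta>" "a \<le> 0"
    unfolding eventually_at_bot_linorder by (meson order_refl min.cobounded1 min.cobounded2)
  have "eventually (\<lambda>x. cdf std_gauss x > \<beta>) at_top"
    using order_tendstoD(1)[OF SG.cdf_lim_at_top_prob assms(2)] .
  then obtain b where b: "cdf std_gauss b > \<beta>" "b \<ge> 0"
    unfolding eventually_at_top_linorder by (meson order_refl max.cobounded1 max.cobounded2)
  obtain u where u: "cdf std_gauss u = \<beta>"
    using IVT[of "cdf std_gauss" a \<beta> b] a b Phi_cont by fastforce
  have "(THE u. measure std_gauss {..u} = \<beta>) = u"
  proof (rule the_equality)
    show "measure std_gauss {..u} = \<beta>" using u by (simp add: cdf_def)
    fix v assume "measure std_gauss {..v} = \<beta>"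
    then have "cdf std_gauss v = cdf std_gauss u" using u by (simp add: cdf_def)
    then show "v = u" by (metis Phi_strict linorder_neq_iff order_less_irrefl)
  qed
  then show ?thesis using u by (simp add: normal_quantile_def)
qed

lemma meas_vec: "(\<lambda>f. \<chi> i. f i) \<in> borel_measurable (PiM (UNIV::'p::finite set) (\<lambda>_. std_gauss))"
proof (rule borel_measurable_euclidean_space[THEN iffD2], intro ballI)
  fix b :: "real^'p" assume "b \<in> Basis"
  then obtain i u where b: "b = axis i u" "u \<in> Basis" unfolding Basis_vec_def by auto
  then have u: "u = 1" by simp
  have "(\<lambda>f. (\<chi> i. f i) \<bullet> b) = (\<lambda>f. f i)" using b u
    by (simp add: inner_axis)
  then show "(\<lambda>f. (\<chi> i. f i) \<bullet> b) \<in> borel_measurable (PiM UNIV (\<lambda>_. std_gauss))"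
    by (simp add: measurable_component_singleton)
qed

lemma char_gauss_component:
  fixes Sh :: "real^'p^'p" and k :: 'p
  shows "char (distr (gauss_vec 0 Sh) borel (\<lambda>v. v $ k)) t
     = complex_of_real (exp (- ((\<Sum>j\<in>UNIV. (Sh$k$j)^2) * t^2) / 2))"
proof -
  interpret PS: product_sigma_finite "\<lambda>_::'p. std_gauss"
    unfolding product_sigma_finite_def by (auto intro: SG.sigma_finite_measure_axioms)
  have mv: "(\<lambda>z. Sh *v z) \<in> borel_measurable borel"
    by (intro borel_measurable_continuous_onI linear_continuous_on) (simp add: linear_conv_bounded_linear[symmetric] matrix_vector_mul_linear)
  have mvk[measurable]: "(\<lambda>z. (Sh *v z) $ k) \<in> borel_measurable borel"
    using measurable_compose[OF mv borel_measurable_nth] by simp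
  note meas_vec[measurable]
  have ik: "(\<lambda>z. iexp (t * (Sh *v z) $ k)) \<in> borel_measurable borel" by measurable
  have "char (distr (gauss_vec 0 Sh) borel (\<lambda>v. v $ k)) t
      = (\<integral>v. iexp (t * v $ k) \<partial>gauss_vec 0 Sh)"
    unfolding char_def
    by (subst integral_distr) (auto simp: measurable_cong_sets[OF sets_distr refl] gauss_vec_def)
  also have "\<dots> = (\<integral>z. iexp (t * (Sh *v z) $ k) \<partial>std_gauss_vec)"
    unfolding gauss_vec_def using mv
    using ik by (subst integral_distr) (auto simp: measurable_cong_sets[OF sets_distr refl] std_gauss_vec_def)
  also have "\<dots> = (\<integral>f. iexp (t * (Sh *v (\<chi> i. f i)) $ k) \<partial>PiM UNIV (\<lambda>_. std_gauss))"
    unfolding std_gauss_vec_def using mv meas_vec by (subst integral_distr) auto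
  also have "\<dots> = (\<integral>f. (\<Prod>j\<in>UNIV. iexp ((t * Sh$k$j) * f j)) \<partial>PiM UNIV (\<lambda>_. std_gauss))"
  proof (intro Bochner_Integration.integral_cong refl)
    fix f :: "'p \<Rightarrow> real"
    have "iexp (t * (Sh *v (\<chi> i. f i)) $ k) = exp (\<Sum>j\<in>UNIV. \<i> * complex_of_real ((t * Sh$k$j) * f j))"
      by (simp add: matrix_vector_mult_def sum_distrib_left mult.assoc)
    also have "\<dots> = (\<Prod>j\<in>UNIV. iexp ((t * Sh$k$j) * f j))"
      by (simp add: exp_sum)
    finally show "iexp (t * (Sh *v (\<chi> i. f i)) $ k) = (\<Prod>j\<in>UNIV. iexp ((t * Sh$k$j) * f j))" .
  qed
  also have "\<dots> = (\<Prod>j\<in>UNIV. (\<integral>x. iexp ((t * Sh$k$j) * x) \<partial>std_gauss))"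
    by (rule PS.product_integral_prod) (auto intro!: SG.integrable_iexp)
  also have "\<dots> = (\<Prod>j\<in>UNIV. complex_of_real (exp (- ((t * Sh$k$j)^2) / 2)))"
  proof (intro prod.cong refl)
    fix j
    show "(\<integral>x. iexp ((t * Sh$k$j) * x) \<partial>std_gauss) = complex_of_real (exp (- ((t * Sh$k$j)^2) / 2))"
      using char_std_gauss[of "t * Sh$k$j"] unfolding char_def by simp
  qed
  also have "\<dots> = complex_of_real (exp (\<Sum>j\<in>UNIV. - ((t * Sh$k$j)^2) / 2))"
    by (simp add: exp_sum)
  also have "(\<Sum>j\<in>UNIV. - ((t * Sh$k$j)^2) / 2) = - ((\<Sum>j\<in>UNIV. (Sh$k$j)^2) * t^2) / 2"
    by (simp add: sum_negf power_mult_distrib sum_distrib_left sum_distrib_right mult.commute flip: sum_divide_distrib)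
  finally show ?thesis .
qed



lemma (in prob_space) sandwich:
  fixes W s :: "nat \<Rightarrow> 'a \<Rightarrow> real" and G :: "real \<Rightarrow> real"
  assumes Wm[measurable]: "\<And>T. W T \<in> borel_measurable M"
    and sm[measurable]: "\<And>T. s T \<in> borel_measurable M"
    and FG: "\<And>x. (\<lambda>T. prob {\<omega>\<in>space M. W T \<omega> \<le> x}) \<longlonglongrightarrow> G x"
    and Gc: "\<And>x. isCont G x"
    and sc: "\<And>\<delta>. \<delta> > 0 \<Longrightarrow> (\<lambda>T. prob {\<omega>\<in>space M. \<delta> < \<bar>s T \<omega> - \<sigma>\<bar>}) \<longlonglongrightarrow> 0"
    and \<sigma>: "\<sigma> > 0" and ab: "a \<le> 0" "0 \<le> b"
  shows "(\<lambda>T. prob {\<omega>\<in>space M. s T \<omega> * a \<le> W T \<omega> \<and> W T \<omega> \<le> s T \<omega> * b})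
           \<longlonglongrightarrow> G (\<sigma> * b) - G (\<sigma> * a)"
proof (rule tendstoI)
  fix e :: real assume e: "e > 0"
  define L where "L = G (\<sigma> * b) - G (\<sigma> * a)"
  obtain \<eta>1 where \<eta>1: "\<eta>1 > 0" "\<And>y. \<bar>y - \<sigma> * b\<bar> < \<eta>1 \<Longrightarrow> \<bar>G y - G (\<sigma> * b)\<bar> < e/4"
    using Gc[of "\<sigma> * b", unfolded continuous_at_eps_delta] e
    by (metis dist_real_def divide_pos_pos zero_less_numeral)
  obtain \<eta>2 where \<eta>2: "\<eta>2 > 0" "\<And>y. \<bar>y - \<sigma> * a\<bar> < \<eta>2 \<Longrightarrow> \<bar>G y - G (\<sigma> * a)\<bar> < e/4"
    using Gc[of "\<sigma> * a", unfolded continuous_at_eps_delta] e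
    by (metis dist_real_def divide_pos_pos zero_less_numeral)
  define \<eta> where "\<eta> = min \<eta>1 \<eta>2"
  have \<eta>: "\<eta> > 0" using \<eta>1 \<eta>2 by (simp add: \<eta>_def)
  define \<delta> where "\<delta> = min (\<sigma>/2) (\<eta> / (2 * (\<bar>a\<bar> + \<bar>b\<bar> + 1)))"
  have \<delta>: "\<delta> > 0" "\<delta> < \<sigma>" using \<sigma> \<eta> by (auto simp: \<delta>_def)
  have "\<delta> \<le> \<eta> / (2 * (\<bar>a\<bar> + \<bar>b\<bar> + 1))" by (simp add: \<delta>_def)
  then have d1: "\<delta> * (\<bar>a\<bar> + \<bar>b\<bar> + 1) \<le> \<eta> / 2"
    by (simp add: field_simps)
  have da: "\<delta> * \<bar>a\<bar> \<le> \<delta> * (\<bar>a\<bar> + \<bar>b\<bar> + 1)" "\<delta> * \<bar>b\<bar> \<le> \<delta> * (\<bar>a\<bar> + \<bar>b\<bar> + 1)"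
    "\<delta> * (\<bar>a\<bar> + 1) \<le> \<delta> * (\<bar>a\<bar> + \<bar>b\<bar> + 1)"
    using \<delta> by (auto intro!: mult_left_mono)
  define x1 where "x1 = (\<sigma> + \<delta>) * a - \<delta>"
  define y1 where "y1 = (\<sigma> + \<delta>) * b"
  define x2 where "x2 = (\<sigma> - \<delta>) * a"
  define y2 where "y2 = (\<sigma> - \<delta>) * b"
  have "x1 - \<sigma> * a = \<delta> * (a - 1)" unfolding x1_def by (simp add: algebra_simps)
  moreover have "\<bar>a - 1\<bar> = \<bar>a\<bar> + 1" using ab by arith
  ultimately have "\<bar>x1 - \<sigma> * a\<bar> = \<delta> * (\<bar>a\<bar> + 1)" using \<delta> by (simp add: abs_mult)
  then have Gx1: "\<bar>G x1 - G (\<sigma> * a)\<bar> < e/4" using d1 da \<eta> \<eta>2 unfolding \<eta>_def by auto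
  have "\<bar>y1 - \<sigma> * b\<bar> = \<delta> * \<bar>b\<bar>" using ab \<delta> unfolding y1_def
    by (simp add: algebra_simps abs_mult)
  then have Gy1: "\<bar>G y1 - G (\<sigma> * b)\<bar> < e/4" using d1 da \<eta> \<eta>1 unfolding \<eta>_def by auto
  have "\<bar>x2 - \<sigma> * a\<bar> = \<delta> * \<bar>a\<bar>" using ab \<delta> unfolding x2_def
    by (simp add: algebra_simps abs_mult)
  then have Gx2: "\<bar>G x2 - G (\<sigma> * a)\<bar> < e/4" using d1 da \<eta> \<eta>2 unfolding \<eta>_def by auto
  have "\<bar>y2 - \<sigma> * b\<bar> = \<delta> * \<bar>b\<bar>" using ab \<delta> unfolding y2_def
    by (simp add: algebra_simps abs_mult)
  then have Gy2: "\<bar>G y2 - G (\<sigma> * b)\<bar> < e/4" using d1 da \<eta> \<eta>1 unfolding \<eta>_def by auto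
  have "(\<sigma> + \<delta>) * a \<le> 0" "(\<sigma> - \<delta>) * a \<le> 0" "(\<sigma> + \<delta>) * b \<ge> 0" "(\<sigma> - \<delta>) * b \<ge> 0"
    using ab \<delta> \<sigma> by (simp_all add: mult_nonneg_nonpos)
  then have xy1: "x1 \<le> y1" and xy2: "x2 \<le> y2" using \<delta> unfolding x1_def y1_def x2_def y2_def
    by linarith+
  define F where "F T x = prob {\<omega>\<in>space M. W T \<omega> \<le> x}" for T x
  define B where "B T = {\<omega>\<in>space M. \<delta> < \<bar>s T \<omega> - \<sigma>\<bar>}" for T
  define E where "E T = {\<omega>\<in>space M. s T \<omega> * a \<le> W T \<omega> \<and> W T \<omega> \<le> s T \<omega> * b}" for T
  have ev: "eventually (\<lambda>T. \<bar>F T x1 - G x1\<bar> < e/8 \<and> \<bar>F T y1 - G y1\<bar> < e/8 \<and>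
      \<bar>F T x2 - G x2\<bar> < e/8 \<and> \<bar>F T y2 - G y2\<bar> < e/8 \<and> prob (B T) < e/8) sequentially"
  proof -
    have "\<And>x. eventually (\<lambda>T. \<bar>F T x - G x\<bar> < e/8) sequentially"
      using tendstoD[OF FG, of "e/8"] e unfolding F_def dist_real_def by simp
    moreover have "eventually (\<lambda>T. prob (B T) < e/8) sequentially"
      using tendstoD[OF sc[OF \<delta>(1)], of "e/8"] e unfolding B_def dist_real_def by simp
    ultimately show ?thesis by (auto intro!: eventually_conj)
  qed
  have Fdiff: "prob {\<omega>\<in>space M. x < W T \<omega> \<and> W T \<omega> \<le> y} = F T y - F T x" if "x \<le> y" for x y T
  proof -
    have "{\<omega>\<in>space M. x < W T \<omega> \<and> W T \<omega> \<le> y} = {\<omega>\<in>space M. W T \<omega> \<le> y} - {\<omega>\<in>space M. W T \<omega> \<le> x}"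
      by auto
    moreover have "{\<omega>\<in>space M. W T \<omega> \<le> x} \<subseteq> {\<omega>\<in>space M. W T \<omega> \<le> y}" using that by auto
    ultimately show ?thesis unfolding F_def by (simp add: finite_measure_Diff)
  qed
  show "eventually (\<lambda>T. dist (prob {\<omega>\<in>space M. s T \<omega> * a \<le> W T \<omega> \<and> W T \<omega> \<le> s T \<omega> * b}) (G (\<sigma> * b) - G (\<sigma> * a)) < e) sequentially"
    using ev
  proof eventually_elim
    case (elim T)
    have up: "prob (E T) \<le> prob {\<omega>\<in>space M. x1 < W T \<omega> \<and> W T \<omega> \<le> y1} + prob (B T)"
    proof -
      have "E T \<subseteq> {\<omega>\<in>space M. x1 < W T \<omega> \<and> W T \<omega> \<le> y1} \<union> B T"
      proof
        fix \<omega> assume \<omega>: "\<omega> \<in> E T"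
        show "\<omega> \<in> {\<omega>\<in>space M. x1 < W T \<omega> \<and> W T \<omega> \<le> y1} \<union> B T"
        proof (cases "\<omega> \<in> B T")
          case False
          then have "s T \<omega> \<le> \<sigma> + \<delta>" using \<omega> unfolding B_def E_def by auto
          then have "s T \<omega> * a \<ge> (\<sigma> + \<delta>) * a" "s T \<omega> * b \<le> (\<sigma> + \<delta>) * b"
            using ab by (auto intro: mult_right_mono_neg mult_right_mono)
          then show ?thesis using \<omega> \<delta> unfolding E_def x1_def y1_def by auto
        qed simp
      qed
      then have "prob (E T) \<le> prob ({\<omega>\<in>space M. x1 < W T \<omega> \<and> W T \<omega> \<le> y1} \<union> B T)"
        unfolding B_def E_def by (intro finite_measure_mono) auto
      also have "\<dots> \<le> prob {\<omega>\<in>space M. x1 < W T \<omega> \<and> W T \<omega> \<le> y1} + prob (B T)"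
        unfolding B_def by (intro measure_subadditive) (auto simp: emeasure_eq_measure)
      finally show ?thesis .
    qed
    have lo: "prob {\<omega>\<in>space M. x2 < W T \<omega> \<and> W T \<omega> \<le> y2} \<le> prob (E T) + prob (B T)"
    proof -
      have "{\<omega>\<in>space M. x2 < W T \<omega> \<and> W T \<omega> \<le> y2} \<subseteq> E T \<union> B T"
      proof
        fix \<omega> assume \<omega>: "\<omega> \<in> {\<omega>\<in>space M. x2 < W T \<omega> \<and> W T \<omega> \<le> y2}"
        show "\<omega> \<in> E T \<union> B T"
        proof (cases "\<omega> \<in> B T")
          case False
          then have "s T \<omega> \<ge> \<sigma> - \<delta>" using \<omega> unfolding B_def by auto
          then have "s T \<omega> * a \<le> (\<sigma> - \<delta>) * a" "s T \<omega> * b \<ge> (\<sigma> - \<delta>) * b"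
            using ab by (auto intro: mult_right_mono_neg mult_right_mono)
          then show ?thesis using \<omega> unfolding E_def x2_def y2_def by auto
        qed simp
      qed
      then have "prob {\<omega>\<in>space M. x2 < W T \<omega> \<and> W T \<omega> \<le> y2} \<le> prob (E T \<union> B T)"
        unfolding B_def E_def by (intro finite_measure_mono) auto
      also have "\<dots> \<le> prob (E T) + prob (B T)"
        unfolding B_def E_def by (intro measure_subadditive) (auto simp: emeasure_eq_measure)
      finally show ?thesis .
    qed
    have "prob (E T) \<ge> 0" by simp
    show ?case using up lo Fdiff[OF xy1, of T] Fdiff[OF xy2, of T] elim Gx1 Gy1 Gx2 Gy2
      unfolding E_def dist_real_def by linarith
  qed
qed



lemma iexp_diff_bound: "cmod (iexp x - 1) \<le> min \<bar>x\<bar> 2"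
proof -
  have "cmod (iexp x - 1) \<le> \<bar>x\<bar>" using iexp_approx1[of x 0] by simp
  moreover have "cmod (iexp x - 1) \<le> cmod (iexp x) + cmod 1" by (rule norm_triangle_ineq4)
  then have "cmod (iexp x - 1) \<le> 2" by (simp add: norm_exp_i_times)
  ultimately show ?thesis by simp
qed

lemma (in prob_space) char_perturb:
  fixes Z :: "'a \<Rightarrow> real" and r Y :: "nat \<Rightarrow> 'a \<Rightarrow> real"
  assumes Zm[measurable]: "Z \<in> borel_measurable M"
    and rm[measurable]: "\<And>T. r T \<in> borel_measurable M"
    and Ym[measurable]: "\<And>T. Y T \<in> borel_measurable M"
    and rs: "\<And>\<epsilon>. \<epsilon> > 0 \<Longrightarrow> (\<lambda>T. prob {\<omega>\<in>space M. \<epsilon> < \<bar>r T \<omega>\<bar>}) \<longlonglongrightarrow> 0"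
    and Yeq: "eventually (\<lambda>T. \<forall>\<omega>\<in>space M. Y T \<omega> = Z \<omega> + r T \<omega>) sequentially"
  shows "(\<lambda>T. char (distr M borel (Y T)) t) \<longlonglongrightarrow> char (distr M borel Z) t"
proof (rule tendstoI)
  fix e :: real assume e: "e > 0"
  define \<epsilon> where "\<epsilon> = e / (2 * (\<bar>t\<bar> + 1))"
  have \<epsilon>: "\<epsilon> > 0" using e by (simp add: \<epsilon>_def)
  have te: "\<bar>t\<bar> * \<epsilon> < e / 2"
  proof -
    have "\<bar>t\<bar> * \<epsilon> < (\<bar>t\<bar> + 1) * \<epsilon>" using \<epsilon> by simp
    also have "\<dots> = e / 2" unfolding \<epsilon>_def by (simp add: field_simps)
    finally show ?thesis .
  qed
  define B where "B T = {\<omega>\<in>space M. \<epsilon> < \<bar>r T \<omega>\<bar>}" for T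
  have Bm[measurable]: "B T \<in> sets M" for T unfolding B_def by measurable
  have evB: "eventually (\<lambda>T. prob (B T) < e/4) sequentially"
    using tendstoD[OF rs[OF \<epsilon>], of "e/4"] e unfolding B_def dist_real_def by simp
  show "eventually (\<lambda>T. dist (char (distr M borel (Y T)) t) (char (distr M borel Z) t) < e) sequentially"
    using evB Yeq
  proof eventually_elim
    case (elim T)
    have c1: "char (distr M borel (Y T)) t = (\<integral>\<omega>. iexp (t * Y T \<omega>) \<partial>M)"
      unfolding char_def by (subst integral_distr) auto
    have c2: "char (distr M borel Z) t = (\<integral>\<omega>. iexp (t * Z \<omega>) \<partial>M)"
      unfolding char_def by (subst integral_distr) auto
    have i1: "integrable M (\<lambda>\<omega>. iexp (t * Y T \<omega>))" by (rule integrable_iexp) auto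
    have i2: "integrable M (\<lambda>\<omega>. iexp (t * Z \<omega>))" by (rule integrable_iexp) auto
    have ib: "integrable M (\<lambda>\<omega>. \<bar>t\<bar> * \<epsilon> + 2 * indicator (B T) \<omega> :: real)"
      by (intro Bochner_Integration.integrable_add integrable_const integrable_mult_right integrable_real_indicator) (auto simp: emeasure_eq_measure)
    have "dist (char (distr M borel (Y T)) t) (char (distr M borel Z) t)
        = norm (\<integral>\<omega>. iexp (t * Y T \<omega>) - iexp (t * Z \<omega>) \<partial>M)"
      unfolding c1 c2 dist_norm using i1 i2 by (simp add: Bochner_Integration.integral_diff)
    also have "\<dots> \<le> (\<integral>\<omega>. norm (iexp (t * Y T \<omega>) - iexp (t * Z \<omega>)) \<partial>M)"
      by (rule integral_norm_bound)
    also have "\<dots> \<le> (\<integral>\<omega>. \<bar>t\<bar> * \<epsilon> + 2 * indicator (B T) \<omega> \<partial>M)"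
    proof (rule integral_mono)
      show "integrable M (\<lambda>\<omega>. norm (iexp (t * Y T \<omega>) - iexp (t * Z \<omega>)))"
        using i1 i2 by auto
      show "integrable M (\<lambda>\<omega>. \<bar>t\<bar> * \<epsilon> + 2 * indicator (B T) \<omega> :: real)" by (rule ib)
      fix \<omega> assume \<omega>: "\<omega> \<in> space M"
      then have "iexp (t * Y T \<omega>) - iexp (t * Z \<omega>) = iexp (t * Z \<omega>) * (iexp (t * r T \<omega>) - 1)"
        using elim by (simp add: algebra_simps exp_add[symmetric])
      then have "norm (iexp (t * Y T \<omega>) - iexp (t * Z \<omega>)) = norm (iexp (t * r T \<omega>) - 1)"
        by (simp add: norm_mult norm_exp_i_times)
      also have "\<dots> \<le> min \<bar>t * r T \<omega>\<bar> 2" by (rule iexp_diff_bound)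
      also have "\<dots> \<le> \<bar>t\<bar> * \<epsilon> + 2 * indicator (B T) \<omega>"
      proof (cases "\<omega> \<in> B T")
        case True
        have "0 \<le> \<bar>t\<bar> * \<epsilon>" using \<epsilon> by simp
        then show ?thesis using True by (simp add: min_le_iff_disj)
      next
        case False
        then have "\<bar>r T \<omega>\<bar> \<le> \<epsilon>" using \<omega> unfolding B_def by auto
        then have "\<bar>t * r T \<omega>\<bar> \<le> \<bar>t\<bar> * \<epsilon>" by (simp add: abs_mult mult_left_mono)
        then show ?thesis using False by simp
      qed
      finally show "norm (iexp (t * Y T \<omega>) - iexp (t * Z \<omega>)) \<le> \<bar>t\<bar> * \<epsilon> + 2 * indicator (B T) \<omega>" .
    qed
    also have "\<dots> = \<bar>t\<bar> * \<epsilon> + 2 * prob (B T)"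
    proof -
      have ii: "integrable M (\<lambda>\<omega>. 2 * indicator (B T) \<omega> :: real)"
        by (intro integrable_mult_right integrable_real_indicator) (auto simp: emeasure_eq_measure)
      have "(\<integral>\<omega>. \<bar>t\<bar> * \<epsilon> + 2 * indicator (B T) \<omega> \<partial>M) = (\<integral>\<omega>. \<bar>t\<bar> * \<epsilon> \<partial>M) + (\<integral>\<omega>. 2 * indicator (B T) \<omega> \<partial>M)"
        using ii by (intro Bochner_Integration.integral_add) auto
      also have "\<dots> = \<bar>t\<bar> * \<epsilon> + 2 * prob (B T)"
        by (simp add: prob_space)
      finally show ?thesis .
    qed
    also have "\<dots> < e" using te elim by simp
    finally show ?case .
  qed
qed



lemma (in prob_space) prob_tendsto_0_mono:
  assumes "(\<lambda>T. prob {\<omega>\<in>space M. P T \<omega>}) \<longlonglongrightarrow> 0"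
    and "\<And>T \<omega>. \<omega> \<in> space M \<Longrightarrow> Q T \<omega> \<Longrightarrow> P T \<omega>"
    and "\<And>T. {\<omega>\<in>space M. P T \<omega>} \<in> events"
  shows "(\<lambda>T. prob {\<omega>\<in>space M. Q T \<omega>}) \<longlonglongrightarrow> 0"
proof (rule tendsto_sandwich[OF _ _ tendsto_const assms(1)])
  show "\<forall>\<^sub>F T in sequentially. 0 \<le> prob {\<omega> \<in> space M. Q T \<omega>}" by simp
  show "\<forall>\<^sub>F T in sequentially. prob {\<omega> \<in> space M. Q T \<omega>} \<le> prob {\<omega> \<in> space M. P T \<omega>}"
    using assms(2,3) by (intro always_eventually allI finite_measure_mono) auto
qed

lemma sqrt_close:
  fixes x y \<delta> :: real
  assumes y: "y > 0" and d: "\<delta> > 0" and xy: "\<bar>x - y\<bar> \<le> min (y/2) (\<delta> * sqrt y / 2)"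
  shows "\<bar>sqrt x - sqrt y\<bar> < \<delta>"
proof -
  have "x > 0" using xy y by (auto simp: abs_if split: if_splits)
  then have "(sqrt x - sqrt y) * (sqrt x + sqrt y) = x - y"
    using y by (simp add: algebra_simps)
  then have "\<bar>sqrt x - sqrt y\<bar> * (sqrt x + sqrt y) = \<bar>x - y\<bar>"
    using \<open>x > 0\<close> y by (metis abs_mult abs_of_nonneg add_nonneg_nonneg real_sqrt_ge_zero less_imp_le)
  moreover have "\<bar>sqrt x - sqrt y\<bar> * sqrt y \<le> \<bar>sqrt x - sqrt y\<bar> * (sqrt x + sqrt y)"
    using \<open>x > 0\<close> by (intro mult_left_mono) auto
  ultimately have "\<bar>sqrt x - sqrt y\<bar> * sqrt y \<le> \<delta> * sqrt y / 2" using xy by linarith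
  moreover have "sqrt y > 0" using y by simp
  ultimately have "\<bar>sqrt x - sqrt y\<bar> \<le> \<delta> / 2" by (simp add: field_simps)
  then show ?thesis using d by simp
qed

lemma (in prob_space) sqrt_conv:
  fixes A :: "nat \<Rightarrow> 'a \<Rightarrow> real^'p^'p" and S :: "real^'p^'p"
  assumes Am[measurable]: "\<And>T. A T \<in> borel_measurable M"
    and conv: "conv_in_prob M A (\<lambda>\<omega>. S)" and pos: "S$k$k > 0" and d: "\<delta> > 0"
  shows "(\<lambda>T. prob {\<omega>\<in>space M. \<delta> < \<bar>sqrt (A T \<omega> $k$k) - sqrt (S$k$k)\<bar>}) \<longlonglongrightarrow> 0"
proof -
  define \<eta> where "\<eta> = min (S$k$k/2) (\<delta> * sqrt (S$k$k) / 2)"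
  have \<eta>: "\<eta> > 0" using pos d by (simp add: \<eta>_def)
  show ?thesis
  proof (rule prob_tendsto_0_mono)
    show "(\<lambda>T. prob {\<omega>\<in>space M. \<eta> < norm (A T \<omega> - S)}) \<longlonglongrightarrow> 0"
      using conv \<eta> unfolding conv_in_prob_def by auto
    show "{\<omega>\<in>space M. \<eta> < norm (A T \<omega> - S)} \<in> events" for T by measurable
    fix T \<omega> assume "\<omega> \<in> space M" and h: "\<delta> < \<bar>sqrt (A T \<omega> $k$k) - sqrt (S$k$k)\<bar>"
    show "\<eta> < norm (A T \<omega> - S)"
    proof (rule ccontr)
      assume "\<not> \<eta> < norm (A T \<omega> - S)"
      then have "norm (A T \<omega> - S) \<le> \<eta>" by simp
      moreover have "\<bar>(A T \<omega> - S) $ k $ k\<bar> \<le> norm (A T \<omega> - S)"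
        by (rule order_trans[OF component_le_norm_cart Finite_Cartesian_Product.norm_nth_le])
      ultimately have "\<bar>A T \<omega> $k$k - S$k$k\<bar> \<le> \<eta>" by simp
      then have "\<bar>sqrt (A T \<omega> $k$k) - sqrt (S$k$k)\<bar> < \<delta>"
        using sqrt_close[OF pos d] unfolding \<eta>_def by blast
      then show False using h by simp
    qed
  qed
qed

lemma event_eq1:
  fixes q x h s u1 u2 :: real
  assumes q: "q > 0"
  shows "(x \<in> {h - s / q * u1 .. h - s / q * u2}) \<longleftrightarrow> (s * (- u1) \<le> q * (x - h) \<and> q * (x - h) \<le> s * (- u2))"
  using q by (auto simp: field_simps)

lemma event_eq2:
  fixes q x h s u1 u2 :: real
  assumes q: "q > 0"
  shows "(x \<in> {h - sqrt 2 / q * s * u1 .. h - sqrt 2 / q * s * u2}) \<longleftrightarrow>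
     (s * (- (sqrt 2 * u1)) \<le> q * (x - h) \<and> q * (x - h) \<le> s * (- (sqrt 2 * u2)))"
  using q by (auto simp: field_simps)




theorem proposition1:
  fixes M :: "'a measure"
    and S :: "nat \<Rightarrow> 'b measure" and X :: "nat \<Rightarrow> 'a \<Rightarrow> 'b"
    and \<Theta> :: "(real ^ 'p) set" and \<theta>0 :: "real ^ 'p"
    and U :: "'a \<Rightarrow> real"
    and H :: "nat \<Rightarrow> 'b \<Rightarrow> real ^ 'p"
    and \<theta>b :: "nat \<Rightarrow> 'a \<Rightarrow> real ^ 'p"
    and \<xi> :: "'a \<Rightarrow> real ^ 'p" and Rb :: "nat \<Rightarrow> 'a \<Rightarrow> real ^ 'p"
    and \<Sigma> \<Sigma>h :: "real ^ 'p ^ 'p"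
    and \<Sigma>hat :: "nat \<Rightarrow> 'a \<Rightarrow> real ^ 'p ^ 'p"
    and \<alpha> :: real
    and F :: "nat \<Rightarrow> 'a measure" and k :: 'p
  assumes M: "prob_space M"
    and X_meas: "\<And>T. X T \<in> M \<rightarrow>\<^sub>M S T"
    and \<Theta>: "\<Theta> \<in> sets borel" and \<theta>0: "\<theta>0 \<in> \<Theta>"
    and U_unif: "distr M lborel U = uniform_measure lborel {0..1}"
    and U_indep: "\<And>T. prob_space.indep_set M (sets (vimage_algebra (space M) U borel)) (sets (vimage_algebra (space M) (X T) (S T)))"
    and H_meas: "\<And>T. H T \<in> S T \<rightarrow>\<^sub>M borel"
    and H_\<Theta>: "\<And>T x. x \<in> space (S T) \<Longrightarrow> H T x \<in> \<Theta>"
    and \<theta>b_meas: "\<And>T. \<theta>b T \<in> borel_measurable M"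
    and \<theta>b_\<Theta>: "\<And>T \<omega>. \<omega> \<in> space M \<Longrightarrow> \<theta>b T \<omega> \<in> \<Theta>"
    and \<theta>b_indep: "\<And>T. prob_space.indep_set M (sets (vimage_algebra (space M) (X T) (S T))) (sets (vimage_algebra (space M) (\<theta>b T) borel))"
    and \<theta>b_distr: "\<And>T. distr M borel (\<theta>b T) = distr M borel (\<lambda>\<omega>. H T (X T \<omega>))"
    and \<Sigma>h_sym: "transpose \<Sigma>h = \<Sigma>h"
    and \<Sigma>h_psd: "\<And>x. 0 \<le> x \<bullet> (\<Sigma>h *v x)"
    and \<Sigma>h_sq: "\<Sigma>h ** \<Sigma>h = \<Sigma>"
    and \<xi>_meas: "\<xi> \<in> borel_measurable M"
    and \<xi>_distr: "distr M borel \<xi> = gauss_vec 0 \<Sigma>h"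
    and Rb_meas: "\<And>T. Rb T \<in> borel_measurable M"
    and Rb_small: "conv_in_prob M (\<lambda>T \<omega>. sqrt (real T) *\<^sub>R Rb T \<omega>) (\<lambda>\<omega>. 0)"
    and decomp: "\<And>T \<omega>. T \<ge> 1 \<Longrightarrow> \<omega> \<in> space M \<Longrightarrow>
                   \<theta>b T \<omega> = \<theta>0 + (1 / sqrt (real T)) *\<^sub>R \<xi> \<omega> + Rb T \<omega>"
    and \<Sigma>hat_meas: "\<And>T. \<Sigma>hat T \<in> borel_measurable M"
    and \<Sigma>hat_conv: "conv_in_prob M \<Sigma>hat (\<lambda>\<omega>. \<Sigma>)"
    and \<alpha>: "0 < \<alpha>" "\<alpha> < 1"
    and F_sub: "\<And>T. subalgebra (vimage_algebra (space M) (X T) (S T)) (F T)"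
    and \<Sigma>_kk_pos: "\<Sigma> $ k $ k > 0"
  shows
    "(\<exists>L. ((\<lambda>T. integral\<^sup>L M (cond_prob M (F T)
        {\<omega> \<in> space M. \<theta>b T \<omega> $ k \<in>
           {H T (X T \<omega>) $ k - sqrt (\<Sigma>hat T \<omega> $ k $ k) / sqrt (real T) * normal_quantile (1 - \<alpha> / 2)
            .. H T (X T \<omega>) $ k - sqrt (\<Sigma>hat T \<omega> $ k $ k) / sqrt (real T) * normal_quantile (\<alpha> / 2)}}))
        \<longlonglongrightarrow> L) \<and> L < 1 - \<alpha>)
     \<and>
     ((\<lambda>T. integral\<^sup>L M (cond_prob M (F T)
        {\<omega> \<in> space M. \<theta>b T \<omega> $ k \<in>
           {H T (X T \<omega>) $ k - sqrt (2 / real T) * sqrt (\<Sigma>hat T \<omega> $ k $ k) * normal_quantile (1 - \<alpha> / 2)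
            .. H T (X T \<omega>) $ k - sqrt (2 / real T) * sqrt (\<Sigma>hat T \<omega> $ k $ k) * normal_quantile (\<alpha> / 2)}}))
        \<longlonglongrightarrow> 1 - \<alpha>)"
  proof -
  interpret P: prob_space M by (rule M)
  define \<sigma> where "\<sigma> = sqrt (\<Sigma> $ k $ k)"
  have \<sigma>: "\<sigma> > 0" using \<Sigma>_kk_pos by (simp add: \<sigma>_def)
  have \<sigma>2: "\<sigma>^2 = \<Sigma> $ k $ k" using \<Sigma>_kk_pos by (simp add: \<sigma>_def)
  define Y where "Y T \<omega> = sqrt (real T) * (\<theta>b T \<omega> $ k - \<theta>0 $ k)" for T \<omega>
  define Ys where "Ys T \<omega> = sqrt (real T) * (H T (X T \<omega>) $ k - \<theta>0 $ k)" for T \<omega>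
  define W where "W T \<omega> = Y T \<omega> - Ys T \<omega>" for T \<omega>
  define s where "s T \<omega> = sqrt (\<Sigma>hat T \<omega> $ k $ k)" for T \<omega>
  define c where "c = sqrt 2 * \<sigma>"
  have c: "c > 0" using \<sigma> by (simp add: c_def)
  define G where "G x = cdf std_gauss (x / c)" for x
  define N2 where "N2 = distr std_gauss borel (\<lambda>x. c * x)"
  define uh where "uh = normal_quantile (1 - \<alpha> / 2)"
  define ul where "ul = normal_quantile (\<alpha> / 2)"
  note [measurable] = X_meas H_meas \<theta>b_meas \<xi>_meas Rb_meas \<Sigma>hat_meas

  have HXm[measurable]: "(\<lambda>\<omega>. H T (X T \<omega>)) \<in> borel_measurable M" for T
    by (rule measurable_compose[OF X_meas H_meas])
  have c1[measurable]: "(\<lambda>\<omega>. \<theta>b T \<omega> $ k) \<in> borel_measurable M" for T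
    by (rule measurable_compose[OF \<theta>b_meas borel_measurable_nth])
  have c2[measurable]: "(\<lambda>\<omega>. H T (X T \<omega>) $ k) \<in> borel_measurable M" for T
    by (rule measurable_compose[OF HXm borel_measurable_nth])
  have c3[measurable]: "(\<lambda>\<omega>. \<xi> \<omega> $ k) \<in> borel_measurable M"
    by (rule measurable_compose[OF \<xi>_meas borel_measurable_nth])
  have c4[measurable]: "(\<lambda>\<omega>. Rb T \<omega> $ k) \<in> borel_measurable M" for T
    by (rule measurable_compose[OF Rb_meas borel_measurable_nth])
  have c5[measurable]: "(\<lambda>\<omega>. \<Sigma>hat T \<omega> $ k $ k) \<in> borel_measurable M" for T
  proof -
    have "(\<lambda>x::real^'p^'p. x $ k $ k) \<in> borel_measurable borel"
      by (intro borel_measurable_continuous_onI continuous_intros)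
    then show ?thesis by (rule measurable_compose[OF \<Sigma>hat_meas])
  qed
  have Puh: "cdf std_gauss uh = 1 - \<alpha> / 2" unfolding uh_def using \<alpha> by (intro Phi_quantile) auto
  have Pul: "cdf std_gauss ul = \<alpha> / 2" unfolding ul_def using \<alpha> by (intro Phi_quantile) auto
  have "cdf std_gauss (- uh) = cdf std_gauss ul" using Puh Pul Phi_neg[of uh] by simp
  then have ul_eq: "ul = - uh" by (metis Phi_strict linorder_neq_iff order_less_irrefl)
  have P0: "cdf std_gauss 0 = 1/2" using Phi_neg[of 0] by simp
  have uh_pos: "uh > 0" using Puh P0 \<alpha> Phi_strict_iff[of 0 uh] by simp

  have Ym[measurable]: "Y T \<in> borel_measurable M" for T unfolding Y_def by measurable
  have Ysm[measurable]: "Ys T \<in> borel_measurable M" for T unfolding Ys_def by measurable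
  have Wm[measurable]: "W T \<in> borel_measurable M" for T unfolding W_def by measurable
  have sm[measurable]: "s T \<in> borel_measurable M" for T unfolding s_def by measurable

  have charZ: "char (distr M borel (\<lambda>\<omega>. \<xi> \<omega> $ k)) t = complex_of_real (exp (- (\<Sigma>$k$k * t^2) / 2))" for t
  proof -
    have "distr M borel (\<lambda>\<omega>. \<xi> \<omega> $ k) = distr (distr M borel \<xi>) borel (\<lambda>v. v $ k)"
      by (subst distr_distr) (auto simp: comp_def)
    also have "\<dots> = distr (gauss_vec 0 \<Sigma>h) borel (\<lambda>v. v $ k)" using \<xi>_distr by simp
    finally have "char (distr M borel (\<lambda>\<omega>. \<xi> \<omega> $ k)) t
        = complex_of_real (exp (- ((\<Sum>j\<in>UNIV. (\<Sigma>h$k$j)^2) * t^2) / 2))"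
      by (simp add: char_gauss_component)
    moreover have "(\<Sum>j\<in>UNIV. (\<Sigma>h$k$j)^2) = \<Sigma>$k$k"
    proof -
      have "\<Sigma>h $ j $ k = \<Sigma>h $ k $ j" for j
        using arg_cong[OF \<Sigma>h_sym, of "\<lambda>A. A $ k $ j"] by (simp add: transpose_def)
      then have "\<Sigma>$k$k = (\<Sum>j\<in>UNIV. \<Sigma>h$k$j * \<Sigma>h$k$j)"
        unfolding \<Sigma>h_sq[symmetric] by (simp add: matrix_matrix_mult_def)
      then show ?thesis by (simp add: power2_eq_square)
    qed
    ultimately show ?thesis by simp
  qed
  have charY: "(\<lambda>T. char (distr M borel (Y T)) t) \<longlonglongrightarrow> complex_of_real (exp (- (\<Sigma>$k$k * t^2) / 2))" for t
  proof -
    have "(\<lambda>T. char (distr M borel (Y T)) t) \<longlonglongrightarrow> char (distr M borel (\<lambda>\<omega>. \<xi> \<omega> $ k)) t"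
    proof (rule P.char_perturb[where r="\<lambda>T \<omega>. sqrt (real T) * Rb T \<omega> $ k"])
      show "(\<lambda>\<omega>. \<xi> \<omega> $ k) \<in> borel_measurable M" by measurable
      show "(\<lambda>\<omega>. sqrt (real T) * Rb T \<omega> $ k) \<in> borel_measurable M" for T by measurable
      show "Y T \<in> borel_measurable M" for T by measurable
      fix \<epsilon> :: real assume \<epsilon>: "\<epsilon> > 0"
      show "(\<lambda>T. P.prob {\<omega>\<in>space M. \<epsilon> < \<bar>sqrt (real T) * Rb T \<omega> $ k\<bar>}) \<longlonglongrightarrow> 0"
      proof (rule P.prob_tendsto_0_mono)
        show "(\<lambda>T. P.prob {\<omega>\<in>space M. \<epsilon> < norm (sqrt (real T) *\<^sub>R Rb T \<omega> - 0)}) \<longlonglongrightarrow> 0"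
          using Rb_small \<epsilon> unfolding conv_in_prob_def by auto
        show "{\<omega>\<in>space M. \<epsilon> < norm (sqrt (real T) *\<^sub>R Rb T \<omega> - 0)} \<in> P.events" for T by measurable
        fix T \<omega> assume "\<epsilon> < \<bar>sqrt (real T) * Rb T \<omega> $ k\<bar>"
        moreover have "\<bar>(sqrt (real T) *\<^sub>R Rb T \<omega>) $ k\<bar> \<le> norm (sqrt (real T) *\<^sub>R Rb T \<omega>)"
          by (rule component_le_norm_cart)
        ultimately show "\<epsilon> < norm (sqrt (real T) *\<^sub>R Rb T \<omega> - 0)" by simp
      qed
    next
      show "eventually (\<lambda>T. \<forall>\<omega>\<in>space M. Y T \<omega> = \<xi> \<omega> $ k + sqrt (real T) * Rb T \<omega> $ k) sequentially"
        unfolding eventually_sequentially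
      proof (intro exI[of _ 1] allI impI ballI)
        fix T :: nat and \<omega> assume T: "T \<ge> 1" and \<omega>: "\<omega> \<in> space M"
        have "sqrt (real T) > 0" using T by simp
        then show "Y T \<omega> = \<xi> \<omega> $ k + sqrt (real T) * Rb T \<omega> $ k"
          unfolding Y_def decomp[OF T \<omega>] by (simp add: algebra_simps)
      qed
    qed
    then show ?thesis using charZ by simp
  qed

  have ind0: "P.indep_var borel (\<lambda>\<omega>. H T (X T \<omega>)) borel (\<theta>b T)" for T
  proof -
    have sub1: "sigma_sets (space M) {(\<lambda>\<omega>. H T (X T \<omega>)) -` A \<inter> space M |A. A \<in> sets borel}
        \<subseteq> sets (vimage_algebra (space M) (X T) (S T))"
    proof -
      have "{(\<lambda>\<omega>. H T (X T \<omega>)) -` A \<inter> space M |A. A \<in> sets borel} \<subseteq> sets (vimage_algebra (space M) (X T) (S T))"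
      proof safe
        fix A :: "(real^'p) set" assume A: "A \<in> sets borel"
        have "(\<lambda>\<omega>. H T (X T \<omega>)) -` A \<inter> space M = X T -` (H T -` A \<inter> space (S T)) \<inter> space M"
          using measurable_space[OF X_meas] by auto
        moreover have "H T -` A \<inter> space (S T) \<in> sets (S T)" using A by measurable
        ultimately show "(\<lambda>\<omega>. H T (X T \<omega>)) -` A \<inter> space M \<in> sets (vimage_algebra (space M) (X T) (S T))"
          using in_vimage_algebra[of "H T -` A \<inter> space (S T)" "S T" "X T" "space M"] by simp
      qed
      then show ?thesis using sets.sigma_sets_subset[of _ "vimage_algebra (space M) (X T) (S T)"] by simp
    qed
    have sub2: "sigma_sets (space M) {\<theta>b T -` A \<inter> space M |A. A \<in> sets borel}
        \<subseteq> sets (vimage_algebra (space M) (\<theta>b T) borel)"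
      by (simp add: sets_vimage_algebra)
    have "P.indep_set (sigma_sets (space M) {(\<lambda>\<omega>. H T (X T \<omega>)) -` A \<inter> space M |A. A \<in> sets borel})
        (sigma_sets (space M) {\<theta>b T -` A \<inter> space M |A. A \<in> sets borel})"
      unfolding P.indep_set_def
      by (rule P.indep_sets_mono_sets[OF \<theta>b_indep[of T, unfolded P.indep_set_def]])
        (use sub1 sub2 in \<open>auto split: bool.split\<close>)
    then show ?thesis unfolding P.indep_var_eq by simp
  qed
  have ind: "P.indep_var borel (\<lambda>\<omega>. - Ys T \<omega>) borel (Y T)" for T
  proof -
    have "P.indep_var borel ((\<lambda>x. - (sqrt (real T) * (x $ k - \<theta>0 $ k))) \<circ> (\<lambda>\<omega>. H T (X T \<omega>)))
        borel ((\<lambda>v. sqrt (real T) * (v $ k - \<theta>0 $ k)) \<circ> \<theta>b T)"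
      by (rule P.indep_var_compose[OF ind0]) measurable
    then show ?thesis by (simp add: comp_def Ys_def Y_def[abs_def])
  qed
  have deq: "distr M borel (Ys T) = distr M borel (Y T)" for T
  proof -
    have g: "(\<lambda>v. sqrt (real T) * (v $ k - \<theta>0 $ k)) \<in> borel_measurable borel" by measurable
    have "distr M borel (Y T) = distr (distr M borel (\<theta>b T)) borel (\<lambda>v. sqrt (real T) * (v $ k - \<theta>0 $ k))"
      using g by (subst distr_distr) (auto simp: comp_def Y_def[abs_def])
    also have "\<dots> = distr (distr M borel (\<lambda>\<omega>. H T (X T \<omega>))) borel (\<lambda>v. sqrt (real T) * (v $ k - \<theta>0 $ k))"
      using \<theta>b_distr by simp
    also have "\<dots> = distr M borel (Ys T)"
      using g by (subst distr_distr) (auto simp: comp_def Ys_def[abs_def])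
    finally show ?thesis by simp
  qed
  have charW: "char (distr M borel (W T)) t = char (distr M borel (Y T)) (- t) * char (distr M borel (Y T)) t" for T t
  proof -
    have "char (distr M borel (W T)) t = char (distr M borel (\<lambda>\<omega>. - Ys T \<omega> + Y T \<omega>)) t"
      by (simp add: W_def[abs_def])
    also have "\<dots> = char (distr M borel (\<lambda>\<omega>. - Ys T \<omega>)) t * char (distr M borel (Y T)) t"
      by (rule P.char_distr_add[OF ind])
    also have "char (distr M borel (\<lambda>\<omega>. - Ys T \<omega>)) t = char (distr M borel (Ys T)) (- t)"
      unfolding char_def by (subst integral_distr, simp, simp)+ simp
    finally show ?thesis by (simp add: deq)
  qed
  have rdN2: "real_distribution N2" unfolding N2_def by (rule SG.real_distribution_distr) simp
  have charN2: "char N2 t = complex_of_real (exp (- (\<Sigma>$k$k * t^2)))" for t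
  proof -
    have "char N2 t = char std_gauss (c * t)" unfolding N2_def by (rule char_distr_mult[OF rd_std_gauss])
    also have "\<dots> = complex_of_real (exp (- (\<Sigma>$k$k * t^2)))"
      unfolding char_std_gauss c_def using \<sigma>2 by (simp add: power_mult_distrib)
    finally show ?thesis .
  qed
  have wc: "weak_conv_m (\<lambda>T. distr M borel (W T)) N2"
  proof (rule levy_continuity)
    show "real_distribution (distr M borel (W T))" for T by (rule P.real_distribution_distr) simp
    show "real_distribution N2" by (rule rdN2)
    fix t
    have "(\<lambda>T. char (distr M borel (Y T)) (- t) * char (distr M borel (Y T)) t) \<longlonglongrightarrow>
        complex_of_real (exp (- (\<Sigma>$k$k * (-t)^2) / 2)) * complex_of_real (exp (- (\<Sigma>$k$k * t^2) / 2))"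
      by (intro tendsto_mult charY)
    also have "complex_of_real (exp (- (\<Sigma>$k$k * (-t)^2) / 2)) * complex_of_real (exp (- (\<Sigma>$k$k * t^2) / 2))
        = char N2 t"
      unfolding charN2 by (simp flip: of_real_mult exp_add)
    finally show "(\<lambda>T. char (distr M borel (W T)) t) \<longlonglongrightarrow> char N2 t" by (simp add: charW)
  qed
  have cdfN2: "cdf N2 x = G x" for x
  proof -
    have "cdf N2 x = measure std_gauss ((\<lambda>y. c * y) -` {..x} \<inter> space std_gauss)"
      unfolding N2_def cdf_def by (subst measure_distr) auto
    also have "(\<lambda>y. c * y) -` {..x} \<inter> space std_gauss = {..x / c}"
      using c by (auto simp: field_simps)
    finally show ?thesis by (simp add: G_def cdf_def)
  qed
  have Gc: "isCont G x" for x
  proof -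
    have "isCont (\<lambda>x. cdf std_gauss (x / c)) x" by (rule isCont_o2[OF _ Phi_cont]) (use c in \<open>intro continuous_intros\<close>, simp)
    then show ?thesis by (simp add: G_def[abs_def])
  qed
  have FG: "(\<lambda>T. P.prob {\<omega>\<in>space M. W T \<omega> \<le> x}) \<longlonglongrightarrow> G x" for x
  proof -
    have "(\<lambda>T. cdf (distr M borel (W T)) x) \<longlonglongrightarrow> cdf N2 x"
      using wc Gc unfolding weak_conv_m_def weak_conv_def cdfN2[abs_def] by (simp add: fun_eq_iff)
    moreover have "cdf (distr M borel (W T)) x = P.prob {\<omega>\<in>space M. W T \<omega> \<le> x}" for T
      unfolding cdf_def by (subst measure_distr) (auto intro!: arg_cong[where f="P.prob"])
    ultimately show ?thesis by (simp add: cdfN2)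
  qed
  have sc: "(\<lambda>T. P.prob {\<omega>\<in>space M. \<delta> < \<bar>s T \<omega> - \<sigma>\<bar>}) \<longlonglongrightarrow> 0" if "\<delta> > 0" for \<delta>
    unfolding s_def \<sigma>_def using P.sqrt_conv[OF \<Sigma>hat_meas \<Sigma>hat_conv \<Sigma>_kk_pos that] .

  have intcp: "integral\<^sup>L M (cond_prob M (F T) A) = P.prob A" if A: "A \<in> sets M" for T A
  proof -
    have sub: "subalgebra M (F T)"
    proof -
      have "sets (vimage_algebra (space M) (X T) (S T)) \<subseteq> sets M"
        by (rule sets_image_in_sets) auto
      then show ?thesis using F_sub[of T] unfolding subalgebra_def by auto
    qed
    interpret FS: finite_measure_subalgebra M "F T"
      by unfold_locales (rule sub)
    have "(\<integral>x. 1 * real_cond_exp M (F T) (indicator A) x \<partial>M) = (\<integral>x. 1 * indicator A x \<partial>M)"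
      using A by (intro FS.real_cond_exp_intg(2)) (auto simp: P.emeasure_eq_measure)
    then show ?thesis unfolding cond_prob_def using A by simp
  qed

  have lim_gen: "(\<lambda>T. P.prob {\<omega>\<in>space M. s T \<omega> * a \<le> W T \<omega> \<and> W T \<omega> \<le> s T \<omega> * b}) \<longlonglongrightarrow> G (\<sigma> * b) - G (\<sigma> * a)"
    if "a \<le> 0" "0 \<le> b" for a b
    using P.sandwich[OF Wm sm FG Gc sc \<sigma> that] by simp
  have G_eval: "G (\<sigma> * x) = cdf std_gauss (x / sqrt 2)" for x
    unfolding G_def c_def using \<sigma> by simp

  show ?thesis
  proof
    show "\<exists>L. ((\<lambda>T. integral\<^sup>L M (cond_prob M (F T)
        {\<omega> \<in> space M. \<theta>b T \<omega> $ k \<in>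
           {H T (X T \<omega>) $ k - sqrt (\<Sigma>hat T \<omega> $ k $ k) / sqrt (real T) * normal_quantile (1 - \<alpha> / 2)
            .. H T (X T \<omega>) $ k - sqrt (\<Sigma>hat T \<omega> $ k $ k) / sqrt (real T) * normal_quantile (\<alpha> / 2)}}))
        \<longlonglongrightarrow> L) \<and> L < 1 - \<alpha>"
    proof (intro exI conjI)
      have L: "(\<lambda>T. P.prob {\<omega>\<in>space M. s T \<omega> * (- uh) \<le> W T \<omega> \<and> W T \<omega> \<le> s T \<omega> * uh})
          \<longlonglongrightarrow> cdf std_gauss (uh / sqrt 2) - cdf std_gauss (- uh / sqrt 2)"
        using lim_gen[of "- uh" uh] uh_pos G_eval[of uh] G_eval[of "- uh"] by simp
      show "(\<lambda>T. integral\<^sup>L M (cond_prob M (F T)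
        {\<omega> \<in> space M. \<theta>b T \<omega> $ k \<in>
           {H T (X T \<omega>) $ k - sqrt (\<Sigma>hat T \<omega> $ k $ k) / sqrt (real T) * normal_quantile (1 - \<alpha> / 2)
            .. H T (X T \<omega>) $ k - sqrt (\<Sigma>hat T \<omega> $ k $ k) / sqrt (real T) * normal_quantile (\<alpha> / 2)}}))
        \<longlonglongrightarrow> cdf std_gauss (uh / sqrt 2) - cdf std_gauss (- uh / sqrt 2)"
      proof (rule Lim_transform_eventually[OF L], unfold eventually_sequentially, intro exI[of _ 1] allI impI)
        fix T :: nat assume T: "T \<ge> 1"
        have q: "sqrt (real T) > 0" using T by simp
        have eq: "{\<omega>\<in>space M. s T \<omega> * (- uh) \<le> W T \<omega> \<and> W T \<omega> \<le> s T \<omega> * uh} =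
          {\<omega> \<in> space M. \<theta>b T \<omega> $ k \<in>
           {H T (X T \<omega>) $ k - sqrt (\<Sigma>hat T \<omega> $ k $ k) / sqrt (real T) * normal_quantile (1 - \<alpha> / 2)
            .. H T (X T \<omega>) $ k - sqrt (\<Sigma>hat T \<omega> $ k $ k) / sqrt (real T) * normal_quantile (\<alpha> / 2)}}"
          unfolding event_eq1[OF q] W_def Y_def Ys_def s_def uh_def[symmetric] ul_def[symmetric] ul_eq
          by (simp add: algebra_simps)
        moreover have "\<dots> \<in> sets M" by (subst eq[symmetric]) measurable
        ultimately show "P.prob {\<omega>\<in>space M. s T \<omega> * (- uh) \<le> W T \<omega> \<and> W T \<omega> \<le> s T \<omega> * uh} =
          integral\<^sup>L M (cond_prob M (F T)
        {\<omega> \<in> space M. \<theta>b T \<omega> $ k \<in>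
           {H T (X T \<omega>) $ k - sqrt (\<Sigma>hat T \<omega> $ k $ k) / sqrt (real T) * normal_quantile (1 - \<alpha> / 2)
            .. H T (X T \<omega>) $ k - sqrt (\<Sigma>hat T \<omega> $ k $ k) / sqrt (real T) * normal_quantile (\<alpha> / 2)}})"
          using intcp by simp
      qed
      have "uh / sqrt 2 < uh" using uh_pos by (simp add: field_simps)
      then have "cdf std_gauss (uh / sqrt 2) < cdf std_gauss uh" by (rule Phi_strict)
      moreover have "- uh < - uh / sqrt 2" using uh_pos by (simp add: field_simps)
      then have "cdf std_gauss (- uh) < cdf std_gauss (- uh / sqrt 2)" by (rule Phi_strict)
      ultimately show "cdf std_gauss (uh / sqrt 2) - cdf std_gauss (- uh / sqrt 2) < 1 - \<alpha>"
        using Puh Pul ul_eq by simp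
    qed
  next
    have L: "(\<lambda>T. P.prob {\<omega>\<in>space M. s T \<omega> * (- (sqrt 2 * uh)) \<le> W T \<omega> \<and> W T \<omega> \<le> s T \<omega> * (- (sqrt 2 * ul))})
        \<longlonglongrightarrow> 1 - \<alpha>"
    proof -
      have "(\<lambda>T. P.prob {\<omega>\<in>space M. s T \<omega> * (- (sqrt 2 * uh)) \<le> W T \<omega> \<and> W T \<omega> \<le> s T \<omega> * (- (sqrt 2 * ul))})
        \<longlonglongrightarrow> G (\<sigma> * (- (sqrt 2 * ul))) - G (\<sigma> * (- (sqrt 2 * uh)))"
        using uh_pos ul_eq by (intro lim_gen) auto
      also have "G (\<sigma> * (- (sqrt 2 * ul))) - G (\<sigma> * (- (sqrt 2 * uh))) = 1 - \<alpha>"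
        unfolding G_eval using Puh Pul ul_eq Phi_neg[of uh] by simp
      finally show ?thesis .
    qed
    show "(\<lambda>T. integral\<^sup>L M (cond_prob M (F T)
        {\<omega> \<in> space M. \<theta>b T \<omega> $ k \<in>
           {H T (X T \<omega>) $ k - sqrt (2 / real T) * sqrt (\<Sigma>hat T \<omega> $ k $ k) * normal_quantile (1 - \<alpha> / 2)
            .. H T (X T \<omega>) $ k - sqrt (2 / real T) * sqrt (\<Sigma>hat T \<omega> $ k $ k) * normal_quantile (\<alpha> / 2)}}))
        \<longlonglongrightarrow> 1 - \<alpha>"
    proof (rule Lim_transform_eventually[OF L], unfold eventually_sequentially, intro exI[of _ 1] allI impI)
      fix T :: nat assume T: "T \<ge> 1"
      have q: "sqrt (real T) > 0" using T by simp
      have eq: "{\<omega>\<in>space M. s T \<omega> * (- (sqrt 2 * uh)) \<le> W T \<omega> \<and> W T \<omega> \<le> s T \<omega> * (- (sqrt 2 * ul))} =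
          {\<omega> \<in> space M. \<theta>b T \<omega> $ k \<in>
           {H T (X T \<omega>) $ k - sqrt (2 / real T) * sqrt (\<Sigma>hat T \<omega> $ k $ k) * normal_quantile (1 - \<alpha> / 2)
            .. H T (X T \<omega>) $ k - sqrt (2 / real T) * sqrt (\<Sigma>hat T \<omega> $ k $ k) * normal_quantile (\<alpha> / 2)}}"
        unfolding real_sqrt_divide event_eq2[OF q] W_def Y_def Ys_def s_def uh_def[symmetric] ul_def[symmetric]
        by (simp add: algebra_simps)
      moreover have "\<dots> \<in> sets M" by (subst eq[symmetric]) measurable
      ultimately show "P.prob {\<omega>\<in>space M. s T \<omega> * (- (sqrt 2 * uh)) \<le> W T \<omega> \<and> W T \<omega> \<le> s T \<omega> * (- (sqrt 2 * ul))} =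
          integral\<^sup>L M (cond_prob M (F T)
        {\<omega> \<in> space M. \<theta>b T \<omega> $ k \<in>
           {H T (X T \<omega>) $ k - sqrt (2 / real T) * sqrt (\<Sigma>hat T \<omega> $ k $ k) * normal_quantile (1 - \<alpha> / 2)
            .. H T (X T \<omega>) $ k - sqrt (2 / real T) * sqrt (\<Sigma>hat T \<omega> $ k $ k) * normal_quantile (\<alpha> / 2)}})"
        using intcp by simp
    qed
  qed
qed


end
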